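(* Fix $d\ge1$ and a finite set $C$ of colours. There is a simple interpretation $J=(\nu(x),\eta(x,y))$ given by first-order formulas such that for every graph $G$ having a tree-model $T$ of depth $d$ with colours from $C$, $G\simeq T_1^J$, where $T_1$ is the labelled tree associated with $T$ as described below. That is, a shrub interpretation is FO definable for each fixed $d$.
   Context: A graph $G$ has a tree-model of $m$ colours and depth $d$ if there is a rooted tree $T$ such that: the set of leaves of $T$ is exactly $V(G)$; every root-to-leaf path has length exactly $d$; each leaf is assigned one of $m$ colours; and whether $uv\in E(G)$ depends solely on the colours of $u,v$ and the distance between $u,v$ in $T$. For such $T$, the labelled tree $T_1$ is $T$ with the leaf colours as labels, where additionally each leaf $v$ gets every label $(i,c)$ such that some vertex $u$ of colour $c$ adjacent to $v$ in $G$ has distance $2i$ from $v$ in $T$. A simple interpretation $(\nu,\eta)$ assigns to a labelled tree $T_1$ the graph $T_1^J$ with vertex set $\{a:T_1\models\nu(a)\}$ and edge set $\{ab: T_1\models\eta(a,b)\}$; a shrub interpretation is such an interpretation with $T_1^J\simeq G$, the vertices being the leaves. *)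

theory Defs
  imports Main
begin

definition walk :: "('a \<Rightarrow> 'a \<Rightarrow> bool) \<Rightarrow> 'a list \<Rightarrow> bool" where
  "walk E p \<longleftrightarrow> (\<forall>i. Suc i < length p \<longrightarrow> E (p ! i) (p ! Suc i))"

definition simple_path :: "('a \<Rightarrow> 'a \<Rightarrow> bool) \<Rightarrow> 'a list \<Rightarrow> 'a \<Rightarrow> 'a \<Rightarrow> bool" where
  "simple_path E p u v \<longleftrightarrow> p \<noteq> [] \<and> hd p = u \<and> last p = v \<and> distinct p \<and> walk E p"

definition is_tree :: "'a set \<Rightarrow> ('a \<Rightarrow> 'a \<Rightarrow> bool) \<Rightarrow> bool" where
  "is_tree V E \<longleftrightarrow> finite V \<and> V \<noteq> {}
     \<and> (\<forall>u v. E u v \<longrightarrow> u \<in> V \<and> v \<in> V)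
     \<and> (\<forall>u v. E u v \<longrightarrow> E v u) \<and> (\<forall>u. \<not> E u u)
     \<and> (\<forall>u\<in>V. \<forall>v\<in>V. \<exists>!p. simple_path E p u v)"

definition tdist :: "('a \<Rightarrow> 'a \<Rightarrow> bool) \<Rightarrow> 'a \<Rightarrow> 'a \<Rightarrow> nat" where
  "tdist E u v = (LEAST n. \<exists>p. length p = Suc n \<and> hd p = u \<and> last p = v \<and> walk E p)"

definition nbrs :: "'a set \<Rightarrow> ('a \<Rightarrow> 'a \<Rightarrow> bool) \<Rightarrow> 'a \<Rightarrow> 'a set" where
  "nbrs V E v = {w \<in> V. E v w}"

definition rleaves :: "'a set \<Rightarrow> ('a \<Rightarrow> 'a \<Rightarrow> bool) \<Rightarrow> 'a \<Rightarrow> 'a set" where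
  "rleaves V E r = {v \<in> V. if v = r then nbrs V E v = {} else card (nbrs V E v) = 1}"

definition is_graph :: "'a set \<Rightarrow> ('a \<Rightarrow> 'a \<Rightarrow> bool) \<Rightarrow> bool" where
  "is_graph V E \<longleftrightarrow> (\<forall>u v. E u v \<longrightarrow> u \<in> V \<and> v \<in> V \<and> E v u \<and> u \<noteq> v)"

definition tree_model ::
  "nat \<Rightarrow> 'c set \<Rightarrow> 'a set \<Rightarrow> ('a \<Rightarrow> 'a \<Rightarrow> bool) \<Rightarrow> 'a set \<Rightarrow> ('a \<Rightarrow> 'a \<Rightarrow> bool) \<Rightarrow> 'a \<Rightarrow> ('a \<Rightarrow> 'c) \<Rightarrow> bool" where
  "tree_model d C VG EG VT ET r col \<longleftrightarrow>
     is_tree VT ET \<and> r \<in> VT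
     \<and> rleaves VT ET r = VG
     \<and> (\<forall>v\<in>VG. tdist ET r v = d)
     \<and> (\<forall>v\<in>VG. col v \<in> C)
     \<and> (\<exists>M :: 'c \<Rightarrow> 'c \<Rightarrow> nat \<Rightarrow> bool. \<forall>u\<in>VG. \<forall>v\<in>VG. u \<noteq> v \<longrightarrow>
          (EG u v \<longleftrightarrow> M (col u) (col v) (tdist ET u v)))"

datatype 'c label = Col 'c | Dist nat 'c

definition T1_labels ::
  "'a set \<Rightarrow> ('a \<Rightarrow> 'a \<Rightarrow> bool) \<Rightarrow> ('a \<Rightarrow> 'a \<Rightarrow> bool) \<Rightarrow> ('a \<Rightarrow> 'c) \<Rightarrow> 'a \<Rightarrow> 'c label set" where
  "T1_labels VG EG ET col v =
     (if v \<in> VG then {Col (col v)} \<union>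
        {Dist i c | i c. \<exists>u\<in>VG. EG v u \<and> col u = c \<and> tdist ET u v = 2 * i}
      else {})"

datatype 'c fm =
    Adj nat nat
  | Eq nat nat
  | Lab "'c label" nat
  | Neg "'c fm"
  | Conj "'c fm" "'c fm"
  | Ex nat "'c fm"

fun sat :: "'a set \<Rightarrow> ('a \<Rightarrow> 'a \<Rightarrow> bool) \<Rightarrow> ('a \<Rightarrow> 'c label set) \<Rightarrow> (nat \<Rightarrow> 'a) \<Rightarrow> 'c fm \<Rightarrow> bool" where
  "sat V E L s (Adj x y) = E (s x) (s y)"
| "sat V E L s (Eq x y) = (s x = s y)"
| "sat V E L s (Lab l x) = (l \<in> L (s x))"
| "sat V E L s (Neg f) = (\<not> sat V E L s f)"
| "sat V E L s (Conj f g) = (sat V E L s f \<and> sat V E L s g)"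
| "sat V E L s (Ex x f) = (\<exists>a\<in>V. sat V E L (s(x := a)) f)"

end

theory Submission
  imports Defs
begin

lemma walk_Nil[simp]: "walk E []" by (simp add: walk_def)
lemma walk_single[simp]: "walk E [x]" by (simp add: walk_def)
lemma walk_Cons2[simp]: "walk E (x#y#xs) \<longleftrightarrow> E x y \<and> walk E (y#xs)"
  unfolding walk_def
  apply (auto simp: nth_Cons split: nat.splits)
  done

lemma walk_Cons: "walk E (x#p) \<longleftrightarrow> walk E p \<and> (p \<noteq> [] \<longrightarrow> E x (hd p))"
  by (cases p) auto

lemma walk_append: "walk E (xs @ ys) \<longleftrightarrow> walk E xs \<and> walk E ys \<and> (xs \<noteq> [] \<and> ys \<noteq> [] \<longrightarrow> E (last xs) (hd ys))"
  by (induction xs) (auto simp: walk_Cons)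

lemma walk_appendD: "walk E (xs @ ys) \<Longrightarrow> walk E ys"
  by (simp add: walk_append)

lemma walk_rev: assumes "\<forall>u v. E u v \<longrightarrow> E v u" shows "walk E (rev p) = walk E p"
  using assms by (induction p) (auto simp: walk_Cons walk_append hd_rev last_rev)

definition W :: "('a \<Rightarrow> 'a \<Rightarrow> bool) \<Rightarrow> nat \<Rightarrow> 'a \<Rightarrow> 'a \<Rightarrow> bool" where
  "W E n u v \<longleftrightarrow> (\<exists>p. length p = Suc n \<and> hd p = u \<and> last p = v \<and> walk E p)"

lemma tdist_W: "tdist E u v = (LEAST n. W E n u v)"
  by (simp add: tdist_def W_def)

lemma W_0[simp]: "W E 0 u v \<longleftrightarrow> u = v"
  unfolding W_def by (auto simp: length_Suc_conv)

lemma W_Suc: "W E (Suc n) u v \<longleftrightarrow> (\<exists>a. E u a \<and> W E n a v)"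
proof
  assume "W E (Suc n) u v"
  then obtain p where p: "length p = Suc (Suc n)" "hd p = u" "last p = v" "walk E p"
    unfolding W_def by blast
  then obtain p' where pp: "p = u # p'" by (cases p) auto
  with p have "p' \<noteq> []" by auto
  note pp this
  then show "\<exists>a. E u a \<and> W E n a v" using p unfolding W_def
    by (auto simp: walk_Cons)
next
  assume "\<exists>a. E u a \<and> W E n a v"
  then obtain a p where "E u a" "length p = Suc n" "hd p = a" "last p = v" "walk E p"
    unfolding W_def by blast
  then show "W E (Suc n) u v" unfolding W_def
    by (intro exI[of _ "u#p"]) (auto simp: walk_Cons)
qed

lemma W_trans: "W E n u v \<Longrightarrow> W E m v w \<Longrightarrow> W E (n+m) u w"
  by (induction n arbitrary: u) (auto simp: W_Suc)

lemma W_sym: assumes "\<forall>u v. E u v \<longrightarrow> E v u" "W E n u v" shows "W E n v u"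
proof -
  obtain p where "length p = Suc n" "hd p = u" "last p = v" "walk E p"
    using assms(2) unfolding W_def by blast
  then show ?thesis unfolding W_def using assms(1)
    by (intro exI[of _ "rev p"]) (auto simp: walk_rev hd_rev last_rev)
qed

lemma shortcut:
  "walk E p \<Longrightarrow> p \<noteq> [] \<Longrightarrow> \<exists>q. distinct q \<and> walk E q \<and> hd q = hd p \<and> last q = last p \<and> q \<noteq> [] \<and> length q \<le> length p"
proof (induction p rule: length_induct)
  case (1 p)
  show ?case
  proof (cases "distinct p")
    case True then show ?thesis using 1 by blast
  next
    case False
    then obtain xs y ys zs where p: "p = xs @ [y] @ ys @ [y] @ zs"
      using not_distinct_decomp by blast
    define p' where "p' = xs @ [y] @ zs"
    have a: "walk E (xs @ [y])" using "1.prems" walk_append[of E "xs@[y]" "ys @ [y] @ zs"] unfolding p by simp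
    have b: "walk E (y # zs)" using "1.prems" walk_appendD[of E "xs@[y]@ys" "[y]@zs"] unfolding p by simp
    have w: "walk E p'" using a b walk_append[of E "xs@[y]" zs] unfolding p'_def
      by (cases zs) (auto simp: walk_Cons)
    have "hd p' = hd p" "last p' = last p" unfolding p p'_def
      by (cases xs; simp) (cases zs; simp)
    moreover have "length p' < length p" unfolding p p'_def by simp
    moreover have "p' \<noteq> []" unfolding p'_def by simp
    ultimately obtain q where "distinct q \<and> walk E q \<and> hd q = hd p' \<and> last q = last p' \<and> q \<noteq> [] \<and> length q \<le> length p'"
      using "1.IH" w by blast
    then show ?thesis using \<open>length p' < length p\<close> \<open>hd p' = hd p\<close> \<open>last p' = last p\<close> by auto
  qed
qed

lemma tdist_le: "W E n u v \<Longrightarrow> tdist E u v \<le> n"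
  unfolding tdist_W by (rule Least_le)

lemma tdist_is: "W E n u v \<Longrightarrow> W E (tdist E u v) u v"
  unfolding tdist_W by (rule LeastI)

lemma tree_conn: assumes "is_tree V E" "u \<in> V" "v \<in> V" shows "\<exists>n. W E n u v"
proof -
  obtain p where "simple_path E p u v" using assms unfolding is_tree_def by blast
  then show ?thesis unfolding simple_path_def W_def
    by (intro exI[of _ "length p - 1"] exI[of _ p]) auto
qed

lemma shortest_distinct:
  assumes "W E n u v"
  shows "\<exists>q. distinct q \<and> walk E q \<and> hd q = u \<and> last q = v \<and> length q = Suc (tdist E u v)"
proof -
  have "W E (tdist E u v) u v" using tdist_is[OF assms] .
  then obtain p where p: "length p = Suc (tdist E u v)" "hd p = u" "last p = v" "walk E p"
    unfolding W_def by blast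
  then obtain q where q: "distinct q" "walk E q" "hd q = u" "last q = v" "q \<noteq> []" "length q \<le> length p"
    using shortcut[of E p] by fastforce
  have "W E (length q - 1) u v" using q unfolding W_def by (intro exI[of _ q]) auto
  then have "tdist E u v \<le> length q - 1" by (rule tdist_le)
  moreover have "length q > 0" using q by simp
  ultimately have "length q = Suc (tdist E u v)" using q(6) p(1) by linarith
  then show ?thesis using q by blast
qed

lemma adj_depth:
  assumes T: "is_tree V E" and r: "r \<in> V" and e: "E u v"
  shows "tdist E r v = Suc (tdist E r u) \<or> tdist E r u = Suc (tdist E r v)"
proof -
  have uv: "u \<in> V" "v \<in> V" "E v u" "u \<noteq> v" using T e unfolding is_tree_def by metis+
  define k where "k = tdist E r u"
  define m where "m = tdist E r v"
  obtain nu where "W E nu r u" using tree_conn[OF T r uv(1)] by blast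
  then have Wk: "W E k r u" unfolding k_def by (rule tdist_is)
  obtain nv where "W E nv r v" using tree_conn[OF T r uv(2)] by blast
  then have Wm: "W E m r v" unfolding m_def by (rule tdist_is)
  have "W E (k + 1) r v" using W_trans[OF Wk, of 1 v] e by (simp add: W_Suc)
  then have m1: "m \<le> k + 1" unfolding m_def by (rule tdist_le)
  have "W E (m + 1) r u" using W_trans[OF Wm, of 1 u] uv by (simp add: W_Suc)
  then have k1: "k \<le> m + 1" unfolding k_def by (rule tdist_le)
  have "k \<noteq> m"
  proof
    assume km: "k = m"
    obtain q where q: "distinct q" "walk E q" "hd q = r" "last q = u" "length q = Suc k"
      using shortest_distinct[OF Wk] unfolding k_def by blast
    obtain q' where q': "distinct q'" "walk E q'" "hd q' = r" "last q' = v" "length q' = Suc m"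
      using shortest_distinct[OF Wm] unfolding m_def by blast
    show False
    proof (cases "v \<in> set q")
      case True
      then obtain j where j: "j < length q" "q ! j = v" by (metis in_set_conv_nth)
      show False
      proof (cases "j = k")
        case True
        have "q \<noteq> []" using q(5) by auto
        then have "q ! j = last q" using q(5) \<open>j = k\<close> by (simp add: last_conv_nth)
        then show False using j q uv by simp
      next
        case False
        then have jk: "j < k" using j q(5) by simp
        have "walk E (take (Suc j) q)" using q(2) walk_append[of E "take (Suc j) q" "drop (Suc j) q"] by simp
        moreover have "hd (take (Suc j) q) = r" using q jk by (cases q) auto
        moreover have "last (take (Suc j) q) = v" using j by (simp add: take_Suc_conv_app_nth)
        moreover have "length (take (Suc j) q) = Suc j" using j by simp
        ultimately have "W E j r v" unfolding W_def by blast
        then have "m \<le> j" unfolding m_def by (rule tdist_le)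
        then show False using jk km by simp
      qed
    next
      case False
      have w1: "walk E (q @ [v])" using q e by (simp add: walk_append)
      have "q \<noteq> []" using q(5) by auto
      then have "hd (q @ [v]) = r" using q(3) by simp
      then have sp1: "simple_path E (q @ [v]) r v" unfolding simple_path_def using q False w1
        by auto
      have sp2: "simple_path E q' r v" unfolding simple_path_def using q' by auto
      have "q @ [v] = q'" using T r uv sp1 sp2 unfolding is_tree_def by blast
      then show False using q(5) q'(5) km by (metis length_append_singleton n_not_Suc_n)
    qed
  qed
  then show ?thesis using m1 k1 unfolding k_def m_def by linarith
qed

lemma walk_parity:
  assumes T: "is_tree V E" and r: "r \<in> V"
  shows "walk E p \<Longrightarrow> p \<noteq> [] \<Longrightarrow> even (tdist E r (hd p) + tdist E r (last p) + (length p - 1))"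
proof (induction p)
  case Nil then show ?case by simp
next
  case (Cons x p)
  show ?case
  proof (cases "p = []")
    case True then show ?thesis by simp
  next
    case False
    then have e: "E x (hd p)" and w: "walk E p" using Cons.prems by (auto simp: walk_Cons)
    have IH: "even (tdist E r (hd p) + tdist E r (last p) + (length p - 1))" using Cons.IH w False by blast
    have "tdist E r (hd p) = Suc (tdist E r x) \<or> tdist E r x = Suc (tdist E r (hd p))"
      using adj_depth[OF T r e] .
    then show ?thesis using IH False by (cases p) (auto)
  qed
qed

lemma tdist_sym: assumes "\<forall>u v. E u v \<longrightarrow> E v u" shows "tdist E a b = tdist E b a"
proof -
  have "(\<lambda>n. W E n a b) = (\<lambda>n. W E n b a)" using W_sym[OF assms] by blast
  then show ?thesis unfolding tdist_W by simp
qed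

lemma leaf_dist:
  assumes tm: "tree_model d C VG EG VT ET r col" and a: "a \<in> VG" and b: "b \<in> VG"
    and d: "d \<ge> 1"
  shows "even (tdist ET a b) \<and> tdist ET a b \<le> 2*d \<and> W ET (tdist ET a b) a b"
proof -
  have T: "is_tree VT ET" and r: "r \<in> VT" and VG: "VG \<subseteq> VT"
    and da: "tdist ET r a = d" and db: "tdist ET r b = d"
    using tm a b unfolding tree_model_def rleaves_def by auto
  have sym: "\<forall>u v. ET u v \<longrightarrow> ET v u" using T unfolding is_tree_def by blast
  obtain n1 where "W ET n1 r a" using tree_conn[OF T r] a VG by blast
  then have "W ET d r a" using tdist_is da by metis
  then have Wa: "W ET d a r" using W_sym[OF sym] by blast
  obtain n2 where "W ET n2 r b" using tree_conn[OF T r] b VG by blast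
  then have Wb: "W ET d r b" using tdist_is db by metis
  have Wab: "W ET (d+d) a b" using W_trans[OF Wa Wb] .
  then have le: "tdist ET a b \<le> 2*d" using tdist_le by fastforce
  have Wt: "W ET (tdist ET a b) a b" using tdist_is[OF Wab] .
  then obtain p where p: "length p = Suc (tdist ET a b)" "hd p = a" "last p = b" "walk ET p"
    unfolding W_def by blast
  have "even (tdist ET r a + tdist ET r b + (length p - 1))"
    using walk_parity[OF T r p(4)] p by fastforce
  then have "even (tdist ET a b)" using da db p(1) by simp
  then show ?thesis using le Wt by blast
qed

fun walkf :: "nat \<Rightarrow> nat \<Rightarrow> nat \<Rightarrow> 'c fm" where
  "walkf 0 x y = Eq x y"
| "walkf (Suc n) x y = Ex (n+2) (Conj (Adj x (n+2)) (walkf n (n+2) y))"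

lemma sat_walkf:
  assumes EV: "\<forall>u v. E u v \<longrightarrow> u\<in>V \<and> v\<in>V"
  shows "y < 2 \<Longrightarrow> (x < 2 \<or> n+2 \<le> x) \<Longrightarrow> sat V E L s (walkf n x y) \<longleftrightarrow> W E n (s x) (s y)"
proof (induction n arbitrary: x s)
  case 0 then show ?case by simp
next
  case (Suc n)
  have "sat V E L s (walkf (Suc n) x y) \<longleftrightarrow>
        (\<exists>a\<in>V. E (s x) a \<and> sat V E L (s(n+2 := a)) (walkf n (n+2) y))"
    using Suc.prems by auto
  also have "\<dots> \<longleftrightarrow> (\<exists>a\<in>V. E (s x) a \<and> W E n a (s y))"
    using Suc.IH[of "n+2"] Suc.prems by auto
  also have "\<dots> \<longleftrightarrow> W E (Suc n) (s x) (s y)" using EV by (auto simp: W_Suc)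
  finally show ?case .
qed

definition Disj :: "'c fm \<Rightarrow> 'c fm \<Rightarrow> 'c fm" where
  "Disj f g = Neg (Conj (Neg f) (Neg g))"

fun disjs :: "'c fm list \<Rightarrow> 'c fm" where
  "disjs [] = Neg (Eq 0 0)"
| "disjs (f#fs) = Disj f (disjs fs)"

fun conjs :: "'c fm list \<Rightarrow> 'c fm" where
  "conjs [] = Eq 0 0"
| "conjs (f#fs) = Conj f (conjs fs)"

lemma sat_disjs: "sat V E L s (disjs fs) \<longleftrightarrow> (\<exists>f\<in>set fs. sat V E L s f)"
  by (induction fs) (auto simp: Disj_def)

lemma sat_conjs: "sat V E L s (conjs fs) \<longleftrightarrow> (\<forall>f\<in>set fs. sat V E L s f)"
  by (induction fs) auto

definition distf :: "nat \<Rightarrow> 'c fm" where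
  "distf n = Conj (walkf n 0 1) (conjs (map (\<lambda>m. Neg (walkf m 0 1)) [0..<n]))"

lemma sat_distf:
  assumes EV: "\<forall>u v. E u v \<longrightarrow> u\<in>V \<and> v\<in>V" and ex: "\<exists>m. W E m (s 0) (s 1)"
  shows "sat V E L s (distf n) \<longleftrightarrow> tdist E (s 0) (s 1) = n"
proof -
  have "sat V E L s (distf n) \<longleftrightarrow> W E n (s 0) (s 1) \<and> (\<forall>m<n. \<not> W E m (s 0) (s 1))"
    unfolding distf_def using sat_walkf[OF EV, of 1 0 _ L s] by (auto simp: sat_conjs)
  also have "\<dots> \<longleftrightarrow> tdist E (s 0) (s 1) = n"
  proof
    assume "W E n (s 0) (s 1) \<and> (\<forall>m<n. \<not> W E m (s 0) (s 1))"
    then show "tdist E (s 0) (s 1) = n" unfolding tdist_W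
      by (intro Least_equality) (auto simp: not_less[symmetric])
  next
    assume "tdist E (s 0) (s 1) = n"
    then show "W E n (s 0) (s 1) \<and> (\<forall>m<n. \<not> W E m (s 0) (s 1))"
      using tdist_is ex tdist_le by (metis leD)
  qed
  finally show ?thesis .
qed

theorem lemma4:
  fixes d :: nat and C :: "'c set"
  assumes "d \<ge> 1" and "finite C"
  shows "\<exists>\<nu> \<eta> :: 'c fm.
    \<forall>(VG :: nat set) EG VT ET r col.
      is_graph VG EG \<and> tree_model d C VG EG VT ET r col \<longrightarrow>
        (let L = T1_labels VG EG ET col in
          {a \<in> VT. sat VT ET L (\<lambda>_. a) \<nu>} = VG
          \<and> (\<forall>a\<in>VG. \<forall>b\<in>VG. a \<noteq> b \<longrightarrow>
               (EG a b \<longleftrightarrow> sat VT ET L (\<lambda>i. if i = 0 then a else b) \<eta>)))"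
proof -
  obtain cs where cs: "set cs = C" using finite_list assms(2) by blast
  define nu :: "'c fm" where "nu = disjs (map (\<lambda>c. Lab (Col c) 0) cs)"
  define eta :: "'c fm" where "eta = disjs (map (\<lambda>(c,i). Conj (Lab (Col c) 1) (Conj (Lab (Dist i c) 0) (distf (2*i))))
      (List.product cs [0..<Suc d]))"
  have main: "let L = T1_labels VG EG ET col in
          {a \<in> VT. sat VT ET L (\<lambda>_. a) nu} = VG
          \<and> (\<forall>a\<in>VG. \<forall>b\<in>VG. a \<noteq> b \<longrightarrow>
               (EG a b \<longleftrightarrow> sat VT ET L (\<lambda>i. if i = 0 then a else b) eta))"
    if H: "is_graph VG EG \<and> tree_model d C VG EG VT ET r col" for VG :: "nat set" and EG VT ET r col
  proof -
    from H have G: "is_graph VG EG" and tm: "tree_model d C VG EG VT ET r col" by auto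
    have T: "is_tree VT ET" and VG: "VG \<subseteq> VT" and colC: "\<forall>v\<in>VG. col v \<in> C"
      using tm unfolding tree_model_def rleaves_def by auto
    obtain M :: "'c \<Rightarrow> 'c \<Rightarrow> nat \<Rightarrow> bool" where M: "\<forall>u\<in>VG. \<forall>v\<in>VG. u \<noteq> v \<longrightarrow>
          (EG u v \<longleftrightarrow> M (col u) (col v) (tdist ET u v))"
      using tm unfolding tree_model_def by blast
    have EV: "\<forall>u v. ET u v \<longrightarrow> u\<in>VT \<and> v\<in>VT" and sym: "\<forall>u v. ET u v \<longrightarrow> ET v u"
      using T unfolding is_tree_def by auto
    define LL where "LL = T1_labels VG EG ET col"
    have part1: "{a \<in> VT. sat VT ET LL (\<lambda>_. a) nu} = VG"
      using VG colC cs unfolding nu_def LL_def by (auto simp: sat_disjs T1_labels_def)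
    have part2: "EG a b \<longleftrightarrow> sat VT ET LL (\<lambda>i. if i = 0 then a else b) eta"
      if a: "a \<in> VG" and b: "b \<in> VG" and ab: "a \<noteq> b" for a b
    proof -
      let ?s = "(\<lambda>i. if i = 0 then a else b) :: nat \<Rightarrow> nat"
      have LD: "even (tdist ET a b) \<and> tdist ET a b \<le> 2*d \<and> W ET (tdist ET a b) a b"
        using leaf_dist[OF tm a b assms(1)] .
      have dist: "sat VT ET LL ?s (distf n) \<longleftrightarrow> tdist ET a b = n" for n
        using sat_distf[OF EV, where s="?s" and n=n and L=LL] LD by auto
      have "sat VT ET LL ?s eta \<longleftrightarrow>
          (\<exists>c\<in>C. \<exists>i<Suc d. Col c \<in> LL b \<and> Dist i c \<in> LL a \<and> tdist ET a b = 2*i)"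
        unfolding eta_def using cs by (auto simp: sat_disjs dist less_Suc_eq)
      also have "\<dots> \<longleftrightarrow> EG a b"
      proof
        assume "\<exists>c\<in>C. \<exists>i<Suc d. Col c \<in> LL b \<and> Dist i c \<in> LL a \<and> tdist ET a b = 2*i"
        then obtain c i where ci: "Col c \<in> LL b" "Dist i c \<in> LL a" "tdist ET a b = 2*i" by blast
        have "c = col b" using ci(1) b unfolding LL_def T1_labels_def by auto
        obtain u where u: "u \<in> VG" "EG a u" "col u = c" "tdist ET u a = 2*i"
          using ci(2) a unfolding LL_def T1_labels_def by auto
        have "a \<noteq> u" using G u(2) unfolding is_graph_def by blast
        then have "M (col a) (col u) (tdist ET a u)" using M a u by blast
        then have "M (col a) (col b) (tdist ET a b)"
          using u ci \<open>c = col b\<close> tdist_sym[OF sym, of a u] by simp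
        then show "EG a b" using M a b ab by blast
      next
        assume e: "EG a b"
        obtain i where i: "tdist ET a b = 2*i" using LD by (auto elim: evenE)
        have "i < Suc d" using LD i by simp
        moreover have "Col (col b) \<in> LL b" using b unfolding LL_def T1_labels_def by simp
        moreover have "Dist i (col b) \<in> LL a" using a b e i tdist_sym[OF sym, of b a]
          unfolding LL_def T1_labels_def by auto
        ultimately show "\<exists>c\<in>C. \<exists>i<Suc d. Col c \<in> LL b \<and> Dist i c \<in> LL a \<and> tdist ET a b = 2*i"
          using colC b i by blast
      qed
      finally show ?thesis by simp
    qed
    show ?thesis using part1 part2 unfolding LL_def Let_def by blast
  qed
  show ?thesis by (intro exI[of _ nu] exI[of _ eta] allI impI) (rule main)
qed

end
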